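(* For every integer $n \geq 1$, $D_n = n\, Der_{n-1}$.
   Context: A linear arrangement of $\{1,\ldots,n\}$ is a sequence $a_1\cdots a_n$ in which each of $1,\ldots,n$ appears exactly once. It contains the pattern $ij$ if $a_t=i$ and $a_{t+1}=j$ for some $t$; otherwise it avoids it. $D_n$ is the number of linear arrangements of $\{1,\ldots,n\}$ avoiding all of the patterns $12, 23, \ldots, (n-1)n, n1$. $Der_m$ is the number of permutations of $\{1,\ldots,m\}$ with no fixed point (so $Der_0 = 1$). *)

theory Defs
  imports "HOL-Combinatorics.Permutations"
begin

definition arrangements :: "nat \<Rightarrow> nat list set" where
  "arrangements n = {xs. distinct xs \<and> set xs = {1..n}}"

definition contains_pattern :: "nat list \<Rightarrow> nat \<Rightarrow> nat \<Rightarrow> bool" where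
  "contains_pattern xs i j \<longleftrightarrow> (\<exists>t. Suc t < length xs \<and> xs ! t = i \<and> xs ! Suc t = j)"

definition forbidden_patterns :: "nat \<Rightarrow> (nat \<times> nat) set" where
  "forbidden_patterns n = {(i, i + 1) | i. 1 \<le> i \<and> i < n} \<union> {(n, 1)}"

definition D :: "nat \<Rightarrow> nat" where
  "D n = card {xs \<in> arrangements n.
                \<forall>(i, j) \<in> forbidden_patterns n. \<not> contains_pattern xs i j}"

definition Der :: "nat \<Rightarrow> nat" where
  "Der m = card {p. p permutes {1..m} \<and> (\<forall>x\<in>{1..m}. p x \<noteq> x)}"

end

theory Submission
  imports Defs
begin

definition PD :: "nat set \<Rightarrow> (nat \<Rightarrow> nat) set" where
  "PD A = {p. p permutes A \<and> (\<forall>x\<in>A. p x \<noteq> x)}"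

lemma Der_PD: "Der m = card (PD {1..m})"
  by (simp add: Der_def PD_def)

lemma PD_finite: "finite A \<Longrightarrow> finite (PD A)"
  by (rule finite_subset[OF _ finite_permutations[of A]]) (auto simp: PD_def)

lemma PD_card: assumes "finite A" "finite B" "card A = card B"
  shows "card (PD A) = card (PD B)"
proof -
  obtain h where "bij_betw h A B" using finite_same_card_bij[OF assms] by blast
  from bij_betw_derangements[OF this] show ?thesis
    unfolding PD_def by (rule bij_betw_same_card)
qed

lemma PD_card_Der: "finite A \<Longrightarrow> card (PD A) = Der (card A)"
  unfolding Der_PD by (rule PD_card) auto

lemma PD_fiber:
  assumes A: "N \<in> A" "k \<in> A" "k \<noteq> N"
  shows "{s \<in> PD A. s N = k} = (\<lambda>t. transpose N k \<circ> t) ` (PD (A - {N}) \<union> PD (A - {N, k}))"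
proof (intro equalityI subsetI)
  fix s assume s: "s \<in> {s \<in> PD A. s N = k}"
  hence sp: "s permutes A" and sd: "\<forall>x\<in>A. s x \<noteq> x" and sN: "s N = k" by (auto simp: PD_def)
  define t where "t = transpose N k \<circ> s"
  have st: "s = transpose N k \<circ> t" by (simp add: t_def comp_assoc[symmetric])
  have tp: "t permutes A" unfolding t_def by (rule permutes_compose[OF sp permutes_swap_id[OF A(1,2)]])
  have tN: "t N = N" using sN by (simp add: t_def)
  show "s \<in> (\<lambda>t. transpose N k \<circ> t) ` (PD (A - {N}) \<union> PD (A - {N, k}))"
  proof (cases "s k = N")
    case True
    have tk: "t k = k" using True by (simp add: t_def)
    have "t permutes A - {N, k}" using tp by (rule permutes_superset) (use tN tk in auto)
    moreover have "\<forall>x\<in>A - {N,k}. t x \<noteq> x"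
    proof
      fix x assume x: "x \<in> A - {N,k}"
      have "s x \<noteq> N" using True x permutes_inj[OF sp] by (auto dest: injD)
      moreover have "s x \<noteq> k" using sN x permutes_inj[OF sp] by (auto dest: injD)
      ultimately show "t x \<noteq> x" using sd x by (simp add: t_def transpose_def)
    qed
    ultimately have "t \<in> PD (A - {N,k})" by (simp add: PD_def)
    thus ?thesis using st by blast
  next
    case False
    have "t permutes A - {N}" using tp by (rule permutes_superset) (use tN in auto)
    moreover have "\<forall>x\<in>A - {N}. t x \<noteq> x"
    proof
      fix x assume x: "x \<in> A - {N}"
      have "s x \<noteq> k" using sN x permutes_inj[OF sp] by (auto dest: injD)
      thus "t x \<noteq> x" using sd x False by (auto simp: t_def transpose_def)
    qed
    ultimately have "t \<in> PD (A - {N})" by (simp add: PD_def)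
    thus ?thesis using st by blast
  qed
next
  fix s assume "s \<in> (\<lambda>t. transpose N k \<circ> t) ` (PD (A - {N}) \<union> PD (A - {N, k}))"
  then obtain t where st: "s = transpose N k \<circ> t" and t: "t \<in> PD (A - {N}) \<union> PD (A - {N, k})" by blast
  have tp: "t permutes A" using t by (auto simp: PD_def intro: permutes_subset)
  have tN: "t N = N" using t by (auto simp: PD_def intro: permutes_not_in)
  have sp: "s permutes A" unfolding st by (rule permutes_compose[OF tp permutes_swap_id[OF A(1,2)]])
  have "\<forall>x\<in>A. s x \<noteq> x"
  proof
    fix x assume x: "x \<in> A"
    show "s x \<noteq> x"
    proof (cases "x = N")
      case True thus ?thesis using tN A by (simp add: st)
    next
      case False
      have tx: "t x \<noteq> N" using tN False permutes_inj[OF tp] by (auto dest: injD)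
      show ?thesis
      proof (cases "t x = k")
        case True thus ?thesis using False by (simp add: st)
      next
        case False2: False
        have "t x \<noteq> x \<or> x = k" using t x False by (auto simp: PD_def)
        moreover have "x = k \<Longrightarrow> t x \<noteq> x" using False2 by simp
        ultimately have "t x \<noteq> x" by blast
        thus ?thesis using tx False2 by (simp add: st transpose_def)
      qed
    qed
  qed
  moreover have "s N = k" using tN by (simp add: st)
  ultimately show "s \<in> {s \<in> PD A. s N = k}" using sp by (simp add: PD_def)
qed

lemma Der_rec: "Der (Suc (Suc m)) = Suc m * (Der (Suc m) + Der m)"
proof -
  define A where "A = {1..Suc (Suc m)}"
  define N where "N = Suc (Suc m)"
  have fA: "finite A" by (simp add: A_def)
  have NA: "N \<in> A" by (simp add: A_def N_def)
  have cover: "PD A = (\<Union>k\<in>A-{N}. {s \<in> PD A. s N = k})"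
  proof (intro equalityI subsetI)
    fix s assume s: "s \<in> PD A"
    hence "s N \<in> A" "s N \<noteq> N" using NA by (auto simp: PD_def permutes_in_image)
    thus "s \<in> (\<Union>k\<in>A-{N}. {s \<in> PD A. s N = k})" using s by blast
  qed auto
  have fib: "card {s \<in> PD A. s N = k} = Der (Suc m) + Der m" if k: "k \<in> A - {N}" for k
  proof -
    have ka: "k \<in> A" "k \<noteq> N" using k by auto
    have "card {s \<in> PD A. s N = k} = card (PD (A - {N}) \<union> PD (A - {N, k}))"
      unfolding PD_fiber[OF NA ka]
    proof (intro card_image inj_onI)
      fix x y :: "nat \<Rightarrow> nat" assume "transpose N k \<circ> x = transpose N k \<circ> y"
      hence "transpose N k (x z) = transpose N k (y z)" for z by (metis comp_apply)
      hence "x z = y z" for z by (metis transpose_involutory)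
      thus "x = y" by blast
    qed
    also have "\<dots> = card (PD (A - {N})) + card (PD (A - {N, k}))"
    proof (rule card_Un_disjoint)
      show "finite (PD (A - {N}))" "finite (PD (A - {N, k}))" using fA by (auto intro: PD_finite)
      show "PD (A - {N}) \<inter> PD (A - {N, k}) = {}"
      proof (rule ccontr)
        assume "PD (A - {N}) \<inter> PD (A - {N, k}) \<noteq> {}"
        then obtain t where "t \<in> PD (A - {N})" "t \<in> PD (A - {N, k})" by blast
        hence "t k \<noteq> k" "t k = k" using k by (auto simp: PD_def intro: permutes_not_in)
        thus False by simp
      qed
    qed
    also have "\<dots> = Der (Suc m) + Der m"
    proof -
      have "card (A - {N}) = Suc m" using NA fA by (simp add: A_def)
      moreover have "card (A - {N, k}) = m" using NA fA k by (simp add: A_def card_Diff_subset)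
      ultimately show ?thesis using fA by (simp add: PD_card_Der)
    qed
    finally show ?thesis .
  qed
  have "Der (Suc (Suc m)) = card (PD A)" by (simp add: Der_PD A_def)
  also have "\<dots> = card (\<Union>k\<in>A-{N}. {s \<in> PD A. s N = k})"
    by (rule arg_cong[OF cover])
  also have "\<dots> = (\<Sum>k\<in>A-{N}. card {s \<in> PD A. s N = k})"
  proof (rule card_UN_disjoint)
    show "finite (A - {N})" using fA by simp
    show "\<forall>i\<in>A - {N}. finite {s \<in> PD A. s N = i}" using PD_finite[OF fA] by simp
    show "\<forall>i\<in>A - {N}. \<forall>j\<in>A - {N}. i \<noteq> j \<longrightarrow> {s \<in> PD A. s N = i} \<inter> {s \<in> PD A. s N = j} = {}" by blast
  qed
  also have "\<dots> = (\<Sum>k\<in>A-{N}. Der (Suc m) + Der m)" using fib by simp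
  also have "\<dots> = Suc m * (Der (Suc m) + Der m)" using NA fA by (simp add: A_def)
  finally show ?thesis .
qed

lemma Der_0: "Der 0 = 1"
proof -
  have "{p. p permutes ({}::nat set) \<and> (\<forall>x\<in>{}. p x \<noteq> x)} = {id}" by auto
  thus ?thesis by (simp add: Der_def)
qed

lemma Der_1: "Der 1 = 0"
proof -
  have "{p. p permutes {1::nat} \<and> (\<forall>x\<in>{1}. p x \<noteq> x)} = {}"
    by (auto simp: permutes_sing)
  thus ?thesis by (simp add: Der_def)
qed

fun adjs :: "nat list \<Rightarrow> (nat \<times> nat) set" where
  "adjs (a # b # xs) = insert (a, b) (adjs (b # xs))"
| "adjs _ = {}"

definition ns :: "nat list \<Rightarrow> bool" where
  "ns xs \<longleftrightarrow> (\<forall>(a, b) \<in> adjs xs. b \<noteq> Suc a)"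

definition W :: "nat \<Rightarrow> nat list set" where
  "W m = {ws. distinct ws \<and> set ws = {0..m} \<and> hd ws = 0 \<and> ns ws}"

lemma adjs_Cons: "adjs (a # bs) = (case bs of [] \<Rightarrow> {} | b # _ \<Rightarrow> {(a, b)}) \<union> adjs bs"
  by (cases bs) auto

lemma adjs_app: "adjs (xs @ y # ys) = adjs (xs @ [y]) \<union> adjs (y # ys)"
proof (induction xs)
  case Nil then show ?case by simp
next
  case (Cons a xs) then show ?case by (cases xs) auto
qed

lemma adjs_app2: "adjs (xs @ y # z # ys) = adjs (xs @ [y]) \<union> adjs (y # z # ys)"
  by (rule adjs_app)

lemma adjs_map: "adjs (map f xs) = (\<lambda>(a, b). (f a, f b)) ` adjs xs"
  by (induction xs rule: adjs.induct) auto

lemma adjs_set: "(a, b) \<in> adjs xs \<Longrightarrow> a \<in> set xs \<and> b \<in> set xs"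
  by (induction xs rule: adjs.induct) auto

lemma adjs_snoc_fst: "(a, b) \<in> adjs (xs @ [y]) \<Longrightarrow> a \<in> set xs"
proof (induction xs)
  case Nil then show ?case by simp
next
  case (Cons c xs) then show ?case by (cases xs) auto
qed

lemma W_finite: "finite (W m)"
  by (rule finite_subset[OF _ finite_subset_distinct[of "{0..m}"]]) (auto simp: W_def)

definition ins :: "nat \<Rightarrow> nat list \<Rightarrow> nat list \<Rightarrow> nat list" where
  "ins x us vs = takeWhile (\<lambda>v. v \<noteq> x) vs @ x # us @ tl (dropWhile (\<lambda>v. v \<noteq> x) vs)"

lemma ins_split: "x \<notin> set as \<Longrightarrow> ins x us (as @ x # bs) = as @ x # us @ bs"
  by (simp add: ins_def takeWhile_append dropWhile_append)

definition inc :: "nat \<Rightarrow> nat \<Rightarrow> nat" where "inc x v = (if x < v then Suc v else v)"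
definition dec :: "nat \<Rightarrow> nat \<Rightarrow> nat" where "dec x v = (if x < v then v - 1 else v)"

lemma inc_inj: "inj (inc x)"
  by (rule injI) (auto simp: inc_def split: if_splits)

lemma inc_dec: "v \<noteq> Suc x \<Longrightarrow> inc x (dec x v) = v"
  by (auto simp: inc_def dec_def)

lemma dec_inj: "inj_on (dec x) (- {Suc x})"
  by (rule inj_onI) (auto simp: dec_def split: if_splits)

lemma inc_succ: "b \<noteq> Suc a \<Longrightarrow> inc x b \<noteq> Suc (inc x a)"
  by (auto simp: inc_def)

lemma dec_succ: "a \<noteq> Suc x \<Longrightarrow> b \<noteq> Suc x \<Longrightarrow> b \<noteq> Suc a \<Longrightarrow> dec x b = Suc (dec x a) \<Longrightarrow> a = x \<and> b = Suc (Suc x)"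
  by (auto simp: dec_def split: if_splits)

lemma inc_image: "x \<le> m \<Longrightarrow> inc x ` {0..m} = {0..Suc m} - {Suc x}"
proof (intro equalityI subsetI)
  fix y assume "x \<le> m" "y \<in> {0..Suc m} - {Suc x}"
  thus "y \<in> inc x ` {0..m}"
  proof (cases "y \<le> x")
    case True thus ?thesis using \<open>x \<le> m\<close> by (intro image_eqI[of _ _ y]) (auto simp: inc_def)
  next
    case False thus ?thesis using \<open>y \<in> _\<close> by (intro image_eqI[of _ _ "y - 1"]) (auto simp: inc_def)
  qed
qed (auto simp: inc_def)

lemma dec_image: "x \<le> m \<Longrightarrow> dec x ` ({0..Suc (Suc m)} - {Suc (Suc m), Suc x}) = {0..m}"
proof (intro equalityI subsetI)
  fix y assume "x \<le> m" "y \<in> {0..m}"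
  thus "y \<in> dec x ` ({0..Suc (Suc m)} - {Suc (Suc m), Suc x})"
  proof (cases "y \<le> x")
    case True thus ?thesis using \<open>x \<le> m\<close> by (intro image_eqI[of _ _ y]) (auto simp: dec_def)
  next
    case False thus ?thesis using \<open>y \<in> _\<close> by (intro image_eqI[of _ _ "Suc y"]) (auto simp: dec_def)
  qed
qed (auto simp: dec_def)

lemma hd_app_Cons: "hd (as @ x # ys) = hd (as @ x # zs)"
  by (cases as) auto

lemma Sa_sub:
  assumes vs: "vs \<in> W (Suc m)" and x: "x \<le> m"
  shows "ins x [Suc (Suc m)] vs \<in> W (Suc (Suc m))"
proof -
  let ?N = "Suc (Suc m)"
  have dv: "distinct vs" and sv: "set vs = {0..Suc m}" and hv: "hd vs = 0" and nv: "ns vs"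
    using vs by (auto simp: W_def)
  have "x \<in> set vs" using sv x by auto
  then obtain as bs where vsd: "vs = as @ x # bs" and xa: "x \<notin> set as" by (meson split_list_first)
  have r: "ins x [?N] vs = as @ x # ?N # bs" using xa by (simp add: vsd ins_split)
  have Nv: "?N \<notin> set vs" using sv by auto
  have "distinct (as @ x # ?N # bs)" using dv Nv by (auto simp: vsd)
  moreover have "set (as @ x # ?N # bs) = {0..?N}"
  proof -
    have "set (as @ x # ?N # bs) = insert ?N (set vs)" by (auto simp: vsd)
    moreover have "insert ?N {0..Suc m} = {0..?N}" by auto
    ultimately show ?thesis unfolding sv by simp
  qed
  moreover have "hd (as @ x # ?N # bs) = 0"
  proof -
    have "hd (as @ x # ?N # bs) = hd (as @ x # bs)" by (rule hd_app_Cons)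
    thus ?thesis using hv vsd by simp
  qed
  moreover have "ns (as @ x # ?N # bs)"
    unfolding ns_def
  proof
    fix p assume p: "p \<in> adjs (as @ x # ?N # bs)"
    have av: "adjs vs = adjs (as @ [x]) \<union> adjs (x # bs)" unfolding vsd by (rule adjs_app)
    have e: "adjs (as @ x # ?N # bs) = adjs (as @ [x]) \<union> {(x, ?N)} \<union> adjs (?N # bs)"
      by (simp add: adjs_app2)
    show "case p of (a, b) \<Rightarrow> b \<noteq> Suc a"
    proof (cases p)
      case (Pair a b)
      have "p \<in> adjs (as @ [x]) \<or> p = (x, ?N) \<or> p \<in> adjs (?N # bs)" using p e by auto
      moreover {
        assume "p \<in> adjs (as @ [x])" hence ?thesis using nv av by (auto simp: ns_def)
      } moreover {
        assume "p = (x, ?N)" hence ?thesis using x by auto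
      } moreover {
        assume h: "p \<in> adjs (?N # bs)"
        have "p \<in> adjs bs \<or> (a = ?N \<and> b \<in> set bs)" using h Pair
          by (cases bs) auto
        moreover have "adjs bs \<subseteq> adjs vs" using av adjs_Cons[of x bs] by auto
        moreover have "set bs \<subseteq> {0..Suc m}" using sv vsd by auto
        moreover have "\<forall>(a, b)\<in>adjs vs. b \<noteq> Suc a" using nv by (simp add: ns_def)
        ultimately have ?thesis using Pair by auto
      }
      ultimately show ?thesis by blast
    qed
  qed
  ultimately show ?thesis unfolding r W_def by blast
qed

lemma inc_fix: "inc x x = x" by (simp add: inc_def)

lemma Sb_sub:
  assumes vs: "vs \<in> W m" and x: "x \<le> m"
  shows "ins x [Suc (Suc m), Suc x] (map (inc x) vs) \<in> W (Suc (Suc m))"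
proof -
  let ?N = "Suc (Suc m)"
  let ?i = "inc x"
  have dv: "distinct vs" and sv: "set vs = {0..m}" and hv: "hd vs = 0" and nv: "ns vs"
    using vs by (auto simp: W_def)
  have nv': "\<forall>(a, b)\<in>adjs vs. b \<noteq> Suc a" using nv by (simp add: ns_def)
  have "x \<in> set vs" using sv x by auto
  then obtain as bs where vsd: "vs = as @ x # bs" and xa: "x \<notin> set as" by (meson split_list_first)
  have xa': "x \<notin> set (map ?i as)"
  proof
    assume "x \<in> set (map ?i as)"
    then obtain v where "v \<in> set as" "?i v = ?i x" using inc_fix[of x] by auto
    thus False using xa inc_inj[of x] by (metis injD)
  qed
  have mv: "map ?i vs = map ?i as @ x # map ?i bs" by (simp add: vsd inc_fix)
  have r: "ins x [?N, Suc x] (map ?i vs) = map ?i as @ x # ?N # Suc x # map ?i bs"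
    unfolding mv using xa' by (simp add: ins_split)
  have smv: "set (map ?i vs) = {0..Suc m} - {Suc x}" using inc_image[OF x] sv by simp
  have dmv: "distinct (map ?i vs)" using dv inc_inj[of x] by (simp add: distinct_map) (metis inj_on_subset subset_UNIV)
  have s1: "set (map ?i as @ x # ?N # Suc x # map ?i bs) = insert ?N (insert (Suc x) (set (map ?i vs)))"
    unfolding mv by auto
  have "distinct (map ?i as @ x # ?N # Suc x # map ?i bs)"
  proof -
    have "?N \<notin> set (map ?i vs)" "Suc x \<notin> set (map ?i vs)" using smv by auto
    thus ?thesis using dmv x unfolding mv by auto
  qed
  moreover have "set (map ?i as @ x # ?N # Suc x # map ?i bs) = {0..?N}"
  proof -
    have "insert ?N (insert (Suc x) ({0..Suc m} - {Suc x})) = {0..?N}" using x by auto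
    thus ?thesis unfolding s1 smv .
  qed
  moreover have "hd (map ?i as @ x # ?N # Suc x # map ?i bs) = 0"
  proof -
    have "hd (map ?i as @ x # ?N # Suc x # map ?i bs) = hd (map ?i as @ x # map ?i bs)" by (rule hd_app_Cons)
    also have "\<dots> = hd (map ?i vs)" by (simp add: mv)
    also have "\<dots> = ?i (hd vs)" using vsd by (intro hd_map) simp
    also have "\<dots> = 0" using hv by (simp add: inc_def)
    finally show ?thesis .
  qed
  moreover have "ns (map ?i as @ x # ?N # Suc x # map ?i bs)"
    unfolding ns_def
  proof
    fix p assume p: "p \<in> adjs (map ?i as @ x # ?N # Suc x # map ?i bs)"
    have av: "adjs vs = adjs (as @ [x]) \<union> adjs (x # bs)" unfolding vsd by (rule adjs_app)
    have e: "adjs (map ?i as @ x # ?N # Suc x # map ?i bs) = adjs (map ?i (as @ [x])) \<union> {(x, ?N), (?N, Suc x)} \<union> adjs (Suc x # map ?i bs)"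
      by (simp add: adjs_app2 inc_fix)
    show "case p of (a, b) \<Rightarrow> b \<noteq> Suc a"
    proof (cases p)
      case (Pair a b)
      have "p \<in> adjs (map ?i (as @ [x])) \<or> p \<in> {(x, ?N), (?N, Suc x)} \<or> p \<in> adjs (Suc x # map ?i bs)" using p e by blast
      moreover {
        assume "p \<in> adjs (map ?i (as @ [x]))"
        hence "p \<in> (\<lambda>(a, b). (?i a, ?i b)) ` adjs (as @ [x])" unfolding adjs_map .
        then obtain a' b' where "(a', b') \<in> adjs (as @ [x])" "a = ?i a'" "b = ?i b'"
          using Pair by auto
        hence ab: "(a', b') \<in> adjs (as @ [x])" "a = ?i a'" "b = ?i b'" by blast+
        hence "(a', b') \<in> adjs vs" using av by blast
        hence "b' \<noteq> Suc a'" using nv' by blast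
        hence ?thesis using ab Pair inc_succ by simp
      } moreover {
        assume "p \<in> {(x, ?N), (?N, Suc x)}" hence ?thesis using x by auto
      } moreover {
        assume h: "p \<in> adjs (Suc x # map ?i bs)"
        have "p \<in> adjs (map ?i bs) \<or> (bs \<noteq> [] \<and> p = (Suc x, ?i (hd bs)))" using h
          by (cases bs) auto
        moreover {
          assume "p \<in> adjs (map ?i bs)"
          hence "p \<in> (\<lambda>(a, b). (?i a, ?i b)) ` adjs bs" unfolding adjs_map .
          then obtain a' b' where "(a', b') \<in> adjs bs" "a = ?i a'" "b = ?i b'"
            using Pair by auto
          moreover have "adjs bs \<subseteq> adjs vs" using av adjs_Cons[of x bs] by auto
          ultimately have ab: "(a', b') \<in> adjs vs" "a = ?i a'" "b = ?i b'" by blast+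
          hence "b' \<noteq> Suc a'" using nv' by blast
          hence ?thesis using ab Pair inc_succ by simp
        } moreover {
          assume h2: "bs \<noteq> [] \<and> p = (Suc x, ?i (hd bs))"
          hence "(x, hd bs) \<in> adjs vs" using av adjs_Cons[of x bs] by (cases bs) auto
          hence "hd bs \<noteq> Suc x" using nv' by auto
          hence ?thesis using h2 Pair by (auto simp: inc_def)
        }
        ultimately have ?thesis by blast
      }
      ultimately show ?thesis by blast
    qed
  qed
  ultimately show ?thesis unfolding r W_def by blast
qed

lemma W_cover:
  assumes ws: "ws \<in> W (Suc (Suc m))"
  shows "\<exists>x\<le>m. (\<exists>vs\<in>W (Suc m). ws = ins x [Suc (Suc m)] vs)
               \<or> (\<exists>vs\<in>W m. ws = ins x [Suc (Suc m), Suc x] (map (inc x) vs))"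
proof -
  let ?N = "Suc (Suc m)"
  have dw: "distinct ws" and sw: "set ws = {0..?N}" and hw: "hd ws = 0" and nw: "ns ws"
    using ws by (auto simp: W_def)
  have nw': "\<forall>(a, b)\<in>adjs ws. b \<noteq> Suc a" using nw by (simp add: ns_def)
  have "?N \<in> set ws" using sw by auto
  then obtain P S where wsd: "ws = P @ ?N # S" by (meson split_list)
  have "P \<noteq> []" using hw wsd by auto
  then obtain as x where Pd: "P = as @ [x]" by (metis rev_exhaust)
  have wsd2: "ws = as @ x # ?N # S" using wsd Pd by simp
  have aw: "adjs ws = adjs (as @ [x]) \<union> adjs (x # ?N # S)" unfolding wsd2 by (rule adjs_app)
  have "(x, ?N) \<in> adjs ws" using aw by simp
  hence xN: "?N \<noteq> Suc x" using nw' by blast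
  have xa: "x \<notin> set as" and xS: "x \<notin> set S" and Na: "?N \<notin> set as" and NS: "?N \<notin> set S"
    and xN': "x \<noteq> ?N"
    using dw unfolding wsd2 by auto
  have "x \<in> set ws" using wsd2 by simp
  hence xm: "x \<le> m" using sw xN xN' by auto
  have adjS: "adjs S \<subseteq> adjs ws" using aw adjs_Cons[of ?N S] adjs_Cons[of x "?N # S"] by auto
  have adjA: "adjs (as @ [x]) \<subseteq> adjs ws" using aw by auto
  show ?thesis
  proof (cases "S \<noteq> [] \<and> hd S = Suc x")
    case False
    define vs where "vs = as @ x # S"
    have r: "ws = ins x [?N] vs" unfolding vs_def wsd2 using xa by (simp add: ins_split)
    have "distinct vs" using dw unfolding vs_def wsd2 by auto
    moreover have "set vs = {0..Suc m}"
    proof -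
      have "set vs = set ws - {?N}" using Na NS xN' unfolding vs_def wsd2 by auto
      moreover have "{0..?N} - {?N} = {0..Suc m}" by auto
      ultimately show ?thesis unfolding sw by simp
    qed
    moreover have "hd vs = 0"
    proof -
      have "hd ws = hd vs" unfolding vs_def wsd2 by (rule hd_app_Cons)
      thus ?thesis using hw by simp
    qed
    moreover have "ns vs" unfolding ns_def
    proof
      fix p assume p: "p \<in> adjs vs"
      have "adjs vs = adjs (as @ [x]) \<union> adjs (x # S)" unfolding vs_def by (rule adjs_app)
      hence "p \<in> adjs (as @ [x]) \<or> p \<in> adjs S \<or> (S \<noteq> [] \<and> p = (x, hd S))"
        using p adjs_Cons[of x S] by (cases S) auto
      thus "case p of (a, b) \<Rightarrow> b \<noteq> Suc a"
        using nw' adjS adjA False by auto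
    qed
    ultimately have "vs \<in> W (Suc m)" by (simp add: W_def)
    thus ?thesis using r xm by blast
  next
    case True
    then obtain S' where Sd: "S = Suc x # S'" by (cases S) auto
    define L where "L = as @ x # S'"
    define vs where "vs = map (dec x) L"
    have SxL: "Suc x \<notin> set L" using dw unfolding L_def wsd2 Sd by auto
    have NL: "?N \<notin> set L" using Na NS xN' unfolding L_def Sd by auto
    have ivs: "map (inc x) vs = L"
      unfolding vs_def map_map using SxL by (induction L) (auto simp: inc_dec)
    have r: "ws = ins x [?N, Suc x] (map (inc x) vs)"
      unfolding ivs L_def wsd2 Sd using xa by (simp add: ins_split)
    have sL: "set L = set ws - {?N, Suc x}" using dw unfolding L_def wsd2 Sd by auto
    have "distinct vs"
    proof -
      have "distinct L" using dw unfolding L_def wsd2 Sd by auto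
      moreover have "inj_on (dec x) (set L)" using SxL by (intro inj_on_subset[OF dec_inj[of x]]) auto
      ultimately show ?thesis unfolding vs_def by (simp add: distinct_map)
    qed
    moreover have "set vs = {0..m}"
      unfolding vs_def set_map sL sw using dec_image[OF xm] by simp
    moreover have "hd vs = 0"
    proof -
      have "hd L = hd ws" unfolding L_def wsd2 by (rule hd_app_Cons)
      hence "hd L = 0" using hw by simp
      moreover have "L \<noteq> []" unfolding L_def by simp
      ultimately show ?thesis unfolding vs_def by (simp add: hd_map dec_def)
    qed
    moreover have "ns vs" unfolding ns_def
    proof
      fix p assume p: "p \<in> adjs vs"
      hence "p \<in> (\<lambda>(a, b). (dec x a, dec x b)) ` adjs L" unfolding vs_def adjs_map .
      then obtain a b where ab: "(a, b) \<in> adjs L" "p = (dec x a, dec x b)" by auto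
      have aL: "a \<in> set L" "b \<in> set L" using adjs_set[OF ab(1)] by auto
      have "adjs L = adjs (as @ [x]) \<union> adjs (x # S')" unfolding L_def by (rule adjs_app)
      hence cs: "(a, b) \<in> adjs (as @ [x]) \<or> (a, b) \<in> adjs S' \<or> (S' \<noteq> [] \<and> (a, b) = (x, hd S'))"
        using ab(1) adjs_Cons[of x S'] by (cases S') auto
      have adjS': "adjs S' \<subseteq> adjs ws" using adjS adjs_Cons[of "Suc x" S'] unfolding Sd by auto
      show "case p of (a, b) \<Rightarrow> b \<noteq> Suc a"
      proof (cases "S' \<noteq> [] \<and> (a, b) = (x, hd S')")
        case True
        have "(Suc x, hd S') \<in> adjs ws" using True aw adjs_Cons[of "Suc x" S'] unfolding Sd by (cases S') auto
        hence "hd S' \<noteq> Suc (Suc x)" using nw' by blast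
        thus ?thesis using True ab(2) by (auto simp: dec_def)
      next
        case False
        hence "(a, b) \<in> adjs ws" using cs adjS' adjA by blast
        hence "b \<noteq> Suc a" using nw' by blast
        moreover have "a \<noteq> x"
        proof
          assume "a = x"
          hence "x \<in> set as \<or> x \<in> set S'" using cs False adjs_snoc_fst adjs_set by blast
          thus False using xa xS Sd by auto
        qed
        ultimately show ?thesis using dec_succ[of a x b] aL SxL ab(2) by auto
      qed
    qed
    ultimately have "vs \<in> W m" by (simp add: W_def)
    thus ?thesis using r xm by blast
  qed
qed

lemma ins_decomp:
  assumes "x \<in> set vs"
  obtains as bs where "vs = as @ x # bs" "x \<notin> set as" "ins x us vs = as @ x # us @ bs"
proof -
  obtain as bs where "vs = as @ x # bs" "x \<notin> set as" using assms by (meson split_list_first)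
  thus ?thesis using that ins_split by blast
qed

lemma inc_notin: assumes "x \<notin> set as" shows "x \<notin> set (map (inc x) as)"
proof
  assume "x \<in> set (map (inc x) as)"
  then obtain v where v: "v \<in> set as" "inc x v = x" by auto
  hence "inc x v = inc x x" by (simp add: inc_fix)
  hence "v = x" using inc_inj[of x] by (metis injD)
  thus False using v assms by simp
qed

lemma app_N_unique:
  assumes "N \<notin> set xs" "N \<notin> set ys" "xs @ N # ys = xs' @ N # ys'"
  shows "xs = xs'" "ys = ys'"
  using append_Cons_eq_iff[OF assms(1,2)] assms(3) by blast+

lemma W_rec: "card (W (Suc (Suc m))) = Suc m * (card (W (Suc m)) + card (W m))"
proof -
  let ?N = "Suc (Suc m)"
  define fa where "fa = (\<lambda>(vs, x). ins x [?N] vs)"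
  define fb where "fb = (\<lambda>(vs, x). ins x [?N, Suc x] (map (inc x) vs))"
  define A where "A = W (Suc m) \<times> {0..m}"
  define B where "B = W m \<times> {0..m}"
  have eq: "W ?N = fa ` A \<union> fb ` B"
  proof (intro equalityI subsetI)
    fix ws assume "ws \<in> W ?N"
    from W_cover[OF this] obtain x where x: "x \<le> m" and
      h: "(\<exists>vs\<in>W (Suc m). ws = ins x [?N] vs) \<or> (\<exists>vs\<in>W m. ws = ins x [?N, Suc x] (map (inc x) vs))"
      by blast
    show "ws \<in> fa ` A \<union> fb ` B"
    proof (cases "\<exists>vs\<in>W (Suc m). ws = ins x [?N] vs")
      case True
      then obtain vs where "vs \<in> W (Suc m)" "ws = ins x [?N] vs" by blast
      hence "ws = fa (vs, x)" "(vs, x) \<in> A" using x by (auto simp: fa_def A_def)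
      thus ?thesis by blast
    next
      case False
      then obtain vs where "vs \<in> W m" "ws = ins x [?N, Suc x] (map (inc x) vs)" using h by blast
      hence "ws = fb (vs, x)" "(vs, x) \<in> B" using x by (auto simp: fb_def B_def)
      thus ?thesis by blast
    qed
  next
    fix ws assume "ws \<in> fa ` A \<union> fb ` B"
    thus "ws \<in> W ?N" using Sa_sub Sb_sub by (auto simp: fa_def fb_def A_def B_def)
  qed
  have injA: "inj_on fa A"
  proof (rule inj_onI)
    fix p q assume p: "p \<in> A" and q: "q \<in> A" and e: "fa p = fa q"
    obtain vs x where pd: "p = (vs, x)" by (cases p)
    obtain vs' x' where qd: "q = (vs', x')" by (cases q)
    have vs: "vs \<in> W (Suc m)" "x \<le> m" using p pd by (auto simp: A_def)
    have vs': "vs' \<in> W (Suc m)" "x' \<le> m" using q qd by (auto simp: A_def)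
    have sv: "set vs = {0..Suc m}" "set vs' = {0..Suc m}" using vs vs' by (auto simp: W_def)
    have "x \<in> set vs" "x' \<in> set vs'" using sv vs vs' by auto
    obtain as bs where d: "vs = as @ x # bs" "x \<notin> set as" "ins x [?N] vs = as @ x # [?N] @ bs"
      by (rule ins_decomp[OF \<open>x \<in> set vs\<close>])
    obtain as' bs' where d': "vs' = as' @ x' # bs'" "x' \<notin> set as'" "ins x' [?N] vs' = as' @ x' # [?N] @ bs'"
      by (rule ins_decomp[OF \<open>x' \<in> set vs'\<close>])
    have eqA: "(as @ [x]) @ ?N # bs = (as' @ [x']) @ ?N # bs'" using e d d' pd qd by (simp add: fa_def)
    have "?N \<notin> set vs" using sv by auto
    hence nn: "?N \<notin> set (as @ [x])" "?N \<notin> set bs" using d(1) by auto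
    have "as @ [x] = as' @ [x']" "bs = bs'" using app_N_unique[OF nn eqA] by blast+
    thus "p = q" using pd qd d d' by simp
  qed
  have injB: "inj_on fb B"
  proof (rule inj_onI)
    fix p q assume p: "p \<in> B" and q: "q \<in> B" and e: "fb p = fb q"
    obtain vs x where pd: "p = (vs, x)" by (cases p)
    obtain vs' x' where qd: "q = (vs', x')" by (cases q)
    have vs: "vs \<in> W m" "x \<le> m" using p pd by (auto simp: B_def)
    have vs': "vs' \<in> W m" "x' \<le> m" using q qd by (auto simp: B_def)
    have sv: "set vs = {0..m}" "set vs' = {0..m}" using vs vs' by (auto simp: W_def)
    have "x \<in> set vs" "x' \<in> set vs'" using sv vs vs' by auto
    then obtain as bs as' bs' where d: "vs = as @ x # bs" "x \<notin> set as" and d': "vs' = as' @ x' # bs'" "x' \<notin> set as'"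
      by (meson split_list_first)
    have xa: "x \<notin> set (map (inc x) as)" using d(2) by (rule inc_notin)
    have xa': "x' \<notin> set (map (inc x') as')" using d'(2) by (rule inc_notin)
    have fbp: "fb p = (map (inc x) as @ [x]) @ ?N # (Suc x # map (inc x) bs)"
      using xa by (simp add: fb_def pd d inc_fix ins_split)
    have fbq: "fb q = (map (inc x') as' @ [x']) @ ?N # (Suc x' # map (inc x') bs')"
      using xa' by (simp add: fb_def qd d' inc_fix ins_split)
    have b1: "\<And>v. v \<le> m \<Longrightarrow> inc x v \<noteq> ?N" "\<And>v. v \<le> m \<Longrightarrow> inc x' v \<noteq> ?N" by (auto simp: inc_def)
    have "?N \<notin> inc x ` set vs"
    proof
      assume "?N \<in> inc x ` set vs"
      then obtain v where "v \<in> set vs" "?N = inc x v" by blast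
      thus False using sv b1(1)[of v] by auto
    qed
    hence nn: "?N \<notin> set (map (inc x) as @ [x])" "?N \<notin> set (Suc x # map (inc x) bs)"
      using d(1) vs(2) by auto
    have eqB: "(map (inc x) as @ [x]) @ ?N # (Suc x # map (inc x) bs) = (map (inc x') as' @ [x']) @ ?N # (Suc x' # map (inc x') bs')"
      using e fbp fbq by simp
    have "map (inc x) as @ [x] = map (inc x') as' @ [x']" "Suc x # map (inc x) bs = Suc x' # map (inc x') bs'"
      using app_N_unique[OF nn eqB] by blast+
    hence xx: "x = x'" and "map (inc x) as = map (inc x) as'" "map (inc x) bs = map (inc x) bs'" by auto
    hence "as = as'" "bs = bs'" using inc_inj[of x] by (simp_all add: inj_map_eq_map)
    thus "p = q" using pd qd d d' xx by simp
  qed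
  have disj: "fa ` A \<inter> fb ` B = {}"
  proof (rule ccontr)
    assume "fa ` A \<inter> fb ` B \<noteq> {}"
    then obtain p q where pq: "p \<in> A" "q \<in> B" "fa p = fb q" by blast
    obtain vs x where pd: "p = (vs, x)" by (cases p)
    obtain vs' x' where qd: "q = (vs', x')" by (cases q)
    have p: "(vs, x) \<in> A" and q: "(vs', x') \<in> B" and e: "fa (vs, x) = fb (vs', x')"
      using pq pd qd by simp_all
    have vs: "vs \<in> W (Suc m)" "x \<le> m" using p by (auto simp: A_def)
    have vs': "vs' \<in> W m" "x' \<le> m" using q by (auto simp: B_def)
    have sv: "set vs = {0..Suc m}" "set vs' = {0..m}" using vs vs' by (auto simp: W_def)
    have nv: "\<forall>(a, b)\<in>adjs vs. b \<noteq> Suc a" using vs by (simp add: W_def ns_def)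
    have "x \<in> set vs" "x' \<in> set vs'" using sv vs vs' by auto
    then obtain as bs as' bs' where d: "vs = as @ x # bs" "x \<notin> set as" and d': "vs' = as' @ x' # bs'" "x' \<notin> set as'"
      by (meson split_list_first)
    have xa': "x' \<notin> set (map (inc x') as')" using d'(2) by (rule inc_notin)
    have fap: "fa (vs, x) = (as @ [x]) @ ?N # bs"
      using d by (simp add: fa_def ins_split)
    have fbq: "fb (vs', x') = (map (inc x') as' @ [x']) @ ?N # (Suc x' # map (inc x') bs')"
      using xa' by (simp add: fb_def d' inc_fix ins_split)
    have b1: "\<And>v. v \<le> m \<Longrightarrow> inc x' v \<noteq> ?N" by (auto simp: inc_def)
    have "?N \<notin> set vs" using sv by auto
    hence nn: "?N \<notin> set (as @ [x])" "?N \<notin> set bs" using d(1) by auto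
    have eqD: "(as @ [x]) @ ?N # bs = (map (inc x') as' @ [x']) @ ?N # (Suc x' # map (inc x') bs')"
      using e fap fbq by simp
    have "as @ [x] = map (inc x') as' @ [x']" "bs = Suc x' # map (inc x') bs'"
      using app_N_unique[OF nn eqD] by blast+
    hence "x = x'" "bs = Suc x # map (inc x) bs'" by auto
    hence "(x, Suc x) \<in> adjs vs" unfolding d(1) by (simp add: adjs_app2)
    thus False using nv by blast
  qed
  have fA: "finite A" "finite B" by (auto simp: A_def B_def W_finite)
  have "card (W ?N) = card (fa ` A) + card (fb ` B)"
    unfolding eq using fA disj by (intro card_Un_disjoint) auto
  also have "\<dots> = card A + card B" using injA injB by (simp add: card_image)
  also have "\<dots> = Suc m * (card (W (Suc m)) + card (W m))"
    by (simp add: A_def B_def card_cartesian_product algebra_simps)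
  finally show ?thesis .
qed

lemma W_0: "card (W 0) = 1"
proof -
  have "W 0 = {[0]}"
  proof (intro equalityI subsetI)
    fix ws assume "ws \<in> W 0"
    hence d: "distinct ws" "set ws = {0}" by (auto simp: W_def)
    hence "length ws = 1" using distinct_card[of ws] by simp
    then obtain y where "ws = [y]" by (cases ws) auto
    thus "ws \<in> {[0]}" using d by simp
  qed (simp add: W_def ns_def)
  thus ?thesis by simp
qed

lemma W_1: "card (W 1) = 0"
proof -
  have "W 1 = {}"
  proof (rule ccontr)
    assume "W 1 \<noteq> {}"
    then obtain ws where "ws \<in> W 1" by blast
    hence d0: "distinct ws" "set ws = {0..1}" "hd ws = 0" "ns ws" by (simp_all add: W_def)
    have i01: "{0..1::nat} = {0, 1}" by auto
    have d: "distinct ws" "set ws = {0, 1}" "hd ws = 0" "ns ws" using d0 i01 by simp_all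
    hence "length ws = 2" using distinct_card[of ws] by simp
    then obtain a b where ws: "ws = [a, b]"
      by (metis length_0_conv length_Suc_conv numeral_2_eq_2)
    hence a0: "a = 0" using d(3) by simp
    have "b \<in> {0, 1}" using d(2) ws by auto
    moreover have "b \<noteq> a" using d(1) ws by simp
    ultimately have "b = 1" using a0 by auto
    thus False using d(4) ws a0 by (simp add: ns_def)
  qed
  thus ?thesis by simp
qed

lemma W_Der: "card (W m) = Der m"
proof -
  have "card (W m) = Der m \<and> card (W (Suc m)) = Der (Suc m)"
  proof (induction m)
    case 0 thus ?case using W_0 W_1 Der_0 Der_1 by simp
  next
    case (Suc m) thus ?case by (simp add: W_rec Der_rec)
  qed
  thus ?thesis by simp
qed

definition rr :: "nat \<Rightarrow> nat \<Rightarrow> nat \<Rightarrow> nat" where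
  "rr n k v = (if k \<le> v then v - k else v + n - k)"
definition ss :: "nat \<Rightarrow> nat \<Rightarrow> nat \<Rightarrow> nat" where
  "ss n k u = (if u + k \<le> n then u + k else u + k - n)"

lemma fp_iff: "a \<in> {1..n} \<Longrightarrow> b \<in> {1..n} \<Longrightarrow>
  (a, b) \<in> forbidden_patterns n \<longleftrightarrow> (a < n \<and> b = Suc a) \<or> (a = n \<and> b = 1)"
  by (auto simp: forbidden_patterns_def)

lemma rr_succ:
  assumes "a \<in> {1..n}" "b \<in> {1..n}" "k \<in> {1..n}"
  shows "rr n k b = Suc (rr n k a) \<longleftrightarrow> ((a < n \<and> b = Suc a) \<or> (a = n \<and> b = 1)) \<and> b \<noteq> k"
  using assms unfolding rr_def by auto

lemma rr_range: "v \<in> {1..n} \<Longrightarrow> k \<in> {1..n} \<Longrightarrow> rr n k v < n"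
  unfolding rr_def by auto

lemma ss_range: "u < n \<Longrightarrow> k \<in> {1..n} \<Longrightarrow> ss n k u \<in> {1..n}"
  unfolding ss_def by auto

lemma rr_ss: "u < n \<Longrightarrow> k \<in> {1..n} \<Longrightarrow> rr n k (ss n k u) = u"
  unfolding rr_def ss_def by auto

lemma ss_rr: "v \<in> {1..n} \<Longrightarrow> k \<in> {1..n} \<Longrightarrow> ss n k (rr n k v) = v"
  unfolding rr_def ss_def by auto

lemma rr_k: "rr n k k = 0" by (simp add: rr_def)
lemma ss_0: "k \<in> {1..n} \<Longrightarrow> ss n k 0 = k" by (simp add: ss_def)

lemma cp_adjs: "contains_pattern xs i j \<longleftrightarrow> (i, j) \<in> adjs xs"
proof (induction xs rule: adjs.induct)
  case (1 a b xs)
  have "contains_pattern (a # b # xs) i j \<longleftrightarrow> (a = i \<and> b = j) \<or> contains_pattern (b # xs) i j"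
  proof
    assume "contains_pattern (a # b # xs) i j"
    then obtain t where t: "Suc t < length (a # b # xs)" "(a # b # xs) ! t = i" "(a # b # xs) ! Suc t = j"
      by (auto simp: contains_pattern_def)
    show "(a = i \<and> b = j) \<or> contains_pattern (b # xs) i j"
    proof (cases t)
      case 0 thus ?thesis using t by simp
    next
      case (Suc t') thus ?thesis using t unfolding contains_pattern_def by (intro disjI2 exI[of _ t']) auto
    qed
  next
    assume "(a = i \<and> b = j) \<or> contains_pattern (b # xs) i j"
    thus "contains_pattern (a # b # xs) i j"
    proof
      assume "a = i \<and> b = j" thus ?thesis unfolding contains_pattern_def by (intro exI[of _ 0]) auto
    next
      assume "contains_pattern (b # xs) i j"
      then obtain t where t: "Suc t < length (b # xs)" "(b # xs) ! t = i" "(b # xs) ! Suc t = j"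
        by (auto simp: contains_pattern_def)
      thus ?thesis unfolding contains_pattern_def by (intro exI[of _ "Suc t"]) auto
    qed
  qed
  thus ?case using 1 by auto
next
  case "2_1" thus ?case by (simp add: contains_pattern_def)
next
  case "2_2" thus ?case by (simp add: contains_pattern_def)
qed

lemma adjs_not_hd: "distinct xs \<Longrightarrow> (a, b) \<in> adjs xs \<Longrightarrow> b \<noteq> hd xs"
  by (induction xs rule: adjs.induct) (auto dest: adjs_set)

definition Av :: "nat \<Rightarrow> nat list set" where
  "Av n = {xs \<in> arrangements n. \<forall>(i, j) \<in> forbidden_patterns n. \<not> contains_pattern xs i j}"

lemma fiber_card:
  assumes n: "n = Suc m" and k: "k \<in> {1..n}"
  shows "card {xs \<in> Av n. hd xs = k} = card (W m)"
proof -
  let ?r = "rr n k" and ?s = "ss n k"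
  let ?F = "{xs \<in> Av n. hd xs = k}"
  have injr: "inj_on ?r {1..n}"
    by (rule inj_on_inverseI[of _ ?s]) (use k ss_rr in auto)
  have injs: "inj_on ?s {0..m}"
    by (rule inj_on_inverseI[of _ ?r]) (use k n rr_ss in auto)
  have rimg: "?r ` {1..n} = {0..m}"
  proof (intro equalityI subsetI)
    fix u assume "u \<in> ?r ` {1..n}"
    then obtain v where v: "v \<in> {1..n}" "u = ?r v" by blast
    have "?r v < n" by (rule rr_range[OF v(1) k])
    thus "u \<in> {0..m}" using v n by simp
  next
    fix u assume u: "u \<in> {0..m}"
    hence un: "u < n" using n by simp
    hence "u = ?r (?s u)" "?s u \<in> {1..n}" using rr_ss[OF un k] ss_range[OF un k] by auto
    thus "u \<in> ?r ` {1..n}" by blast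
  qed
  have simg: "?s ` {0..m} = {1..n}"
  proof (intro equalityI subsetI)
    fix v assume "v \<in> ?s ` {0..m}"
    then obtain u where u: "u \<in> {0..m}" "v = ?s u" by blast
    have "u < n" using u n by simp
    thus "v \<in> {1..n}" using ss_range[OF _ k] u by simp
  next
    fix v assume v: "v \<in> {1..n}"
    hence "v = ?s (?r v)" "?r v \<in> {0..m}" using ss_rr[OF v k] rr_range[OF v k] n by auto
    thus "v \<in> ?s ` {0..m}" by blast
  qed
  have img: "map ?r ` ?F = W m"
  proof (intro equalityI subsetI)
    fix ws assume "ws \<in> map ?r ` ?F"
    then obtain xs where xs: "xs \<in> ?F" and ws: "ws = map ?r xs" by blast
    have dx: "distinct xs" and sx: "set xs = {1..n}" and hx: "hd xs = k"
      and ax: "\<forall>(i, j) \<in> forbidden_patterns n. (i, j) \<notin> adjs xs"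
      using xs by (auto simp: Av_def arrangements_def cp_adjs)
    have xne: "xs \<noteq> []" using sx n by auto
    have "distinct ws" unfolding ws using dx injr sx by (simp add: distinct_map)
    moreover have "set ws = {0..m}" unfolding ws using rimg sx by simp
    moreover have "hd ws = 0" unfolding ws using xne hx by (simp add: hd_map rr_k)
    moreover have "ns ws" unfolding ns_def
    proof
      fix p assume "p \<in> adjs ws"
      hence "p \<in> (\<lambda>(a, b). (?r a, ?r b)) ` adjs xs" unfolding ws adjs_map .
      then obtain a b where ab: "(a, b) \<in> adjs xs" "p = (?r a, ?r b)" by auto
      have abn: "a \<in> {1..n}" "b \<in> {1..n}" using adjs_set[OF ab(1)] sx by auto
      have "(a, b) \<notin> forbidden_patterns n" using ax ab(1) by blast
      hence "\<not> ((a < n \<and> b = Suc a) \<or> (a = n \<and> b = 1))" using fp_iff[OF abn] by simp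
      hence "?r b \<noteq> Suc (?r a)" using rr_succ[OF abn k] by simp
      thus "case p of (a, b) \<Rightarrow> b \<noteq> Suc a" using ab(2) by simp
    qed
    ultimately show "ws \<in> W m" by (simp add: W_def)
  next
    fix ws assume ws: "ws \<in> W m"
    have dw: "distinct ws" and sw: "set ws = {0..m}" and hw: "hd ws = 0" and nw: "ns ws"
      using ws by (auto simp: W_def)
    have wne: "ws \<noteq> []" using sw by auto
    define xs where "xs = map ?s ws"
    have rs: "map ?r xs = ws" unfolding xs_def map_map
      by (rule map_idI) (use sw n rr_ss[OF _ k] in auto)
    have dx: "distinct xs" unfolding xs_def using dw injs sw by (simp add: distinct_map)
    have sx: "set xs = {1..n}" unfolding xs_def using simg sw by simp
    have hx: "hd xs = k" unfolding xs_def using wne hw by (simp add: hd_map ss_0[OF k])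
    have "\<forall>(i, j) \<in> forbidden_patterns n. \<not> contains_pattern xs i j"
    proof (intro ballI)
      fix p assume p: "p \<in> forbidden_patterns n"
      obtain i j where pij: "p = (i, j)" by (cases p)
      show "case p of (i, j) \<Rightarrow> \<not> contains_pattern xs i j"
      proof (unfold pij, simp, rule notI)
        assume "contains_pattern xs i j"
        hence ij: "(i, j) \<in> adjs xs" by (simp add: cp_adjs)
        hence "(i, j) \<in> (\<lambda>(a, b). (?s a, ?s b)) ` adjs ws" unfolding xs_def adjs_map .
        then obtain a b where ab: "(a, b) \<in> adjs ws" "i = ?s a" "j = ?s b" by auto
        have ijn: "i \<in> {1..n}" "j \<in> {1..n}" using adjs_set[OF ij] sx by auto
        have "j \<noteq> hd xs" using adjs_not_hd[OF dx ij] .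
        hence jk: "j \<noteq> k" using hx by simp
        have "(i < n \<and> j = Suc i) \<or> (i = n \<and> j = 1)" using p pij fp_iff[OF ijn] by simp
        hence "?r j = Suc (?r i)" using rr_succ[OF ijn k] jk by simp
        moreover have "?r i = a" "?r j = b" using ab adjs_set[OF ab(1)] sw n rr_ss[OF _ k] by auto
        ultimately have "b = Suc a" by simp
        thus False using nw ab(1) by (auto simp: ns_def)
      qed
    qed
    hence "xs \<in> ?F" using dx sx hx by (simp add: Av_def arrangements_def)
    thus "ws \<in> map ?r ` ?F" using rs by blast
  qed
  have "inj_on (map ?r) ?F"
  proof (rule inj_onI)
    fix xs ys assume "xs \<in> ?F" "ys \<in> ?F" and e: "map ?r xs = map ?r ys"
    hence "set xs = {1..n}" "set ys = {1..n}" by (auto simp: Av_def arrangements_def)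
    hence "inj_on ?r (set xs \<union> set ys)" using injr by simp
    thus "xs = ys" using e by (simp add: inj_on_map_eq_map)
  qed
  thus ?thesis using img card_image by metis
qed

lemma D_W: assumes "n = Suc m" shows "D n = n * card (W m)"
proof -
  have fin: "finite (Av n)"
    by (rule finite_subset[OF _ finite_subset_distinct[of "{1..n}"]]) (auto simp: Av_def arrangements_def)
  have cov: "Av n = (\<Union>k\<in>{1..n}. {xs \<in> Av n. hd xs = k})"
  proof (intro equalityI subsetI)
    fix xs assume xs: "xs \<in> Av n"
    hence "set xs = {1..n}" by (simp add: Av_def arrangements_def)
    hence "xs \<noteq> []" "set xs = {1..n}" using assms by auto
    hence "hd xs \<in> {1..n}" by (metis hd_in_set)
    thus "xs \<in> (\<Union>k\<in>{1..n}. {xs \<in> Av n. hd xs = k})" using xs by blast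
  qed auto
  have "D n = card (Av n)" by (simp add: D_def Av_def)
  also have "\<dots> = card (\<Union>k\<in>{1..n}. {xs \<in> Av n. hd xs = k})" by (rule arg_cong[OF cov])
  also have "\<dots> = (\<Sum>k\<in>{1..n}. card {xs \<in> Av n. hd xs = k})"
  proof (rule card_UN_disjoint)
    show "finite {1..n}" by simp
    show "\<forall>i\<in>{1..n}. finite {xs \<in> Av n. hd xs = i}" using fin by simp
    show "\<forall>i\<in>{1..n}. \<forall>j\<in>{1..n}. i \<noteq> j \<longrightarrow> {xs \<in> Av n. hd xs = i} \<inter> {xs \<in> Av n. hd xs = j} = {}" by blast
  qed
  also have "\<dots> = (\<Sum>k\<in>{1..n}. card (W m))" using fiber_card[OF assms] by simp
  also have "\<dots> = n * card (W m)" by simp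
  finally show ?thesis .
qed

theorem lemma3p1:
  fixes n :: nat
  assumes "n \<ge> 1"
  shows "D n = n * Der (n - 1)"
proof -
  obtain m where n: "n = Suc m" using assms by (cases n) auto
  show ?thesis using D_W[OF n] W_Der[of m] n by simp
qed

end
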